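(* Let $L_0$ be the boundary value problem on the tree $G$ (with $m$ edges and boundary conditions BC) with all potentials and all constants equal to zero, i.e. $\sigma_j\equiv 0$ and $\gamma_j=0$ for $j=1,\dots,m$, and let $\Delta_0(\lambda)$ be its characteristic function. Then $$\Delta_0(\lambda)=\rho^{1-d}\,R_m(\sin\rho\pi,\cos\rho\pi),$$ where $d$ is the number of Dirichlet conditions among BC and $R_m$ is a polynomial in two variables of degree $m$. Moreover, $$R_m(\sin\rho\pi,\cos\rho\pi)=\begin{cases}\sin\rho\pi\, Q_{m-1}(\cos\rho\pi), & d \text{ even},\\ Q_m(\cos\rho\pi), & d\text{ odd},\end{cases}$$ where $Q_k$ ($k=m-1$ or $k=m$) is a polynomial of degree $k$ satisfying $Q_k(z)=(-1)^kQ_k(-z)$.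
   Context: Let $G$ be a finite tree with vertex set $V$ and edges $e_1,\dots,e_m$ ($m\ge1$), all of length $\pi$. For $v\in V$ let $E_v$ be the set of edges incident to $v$. Vertices of degree $1$ are boundary vertices (set $\partial G$), the others are internal (set $\mathrm{int}\,G$). Each edge $e_j$ is parametrized by $x_j\in[0,\pi]$, the values $0$ and $\pi$ corresponding to its two endpoints. Let $\sigma_j\in L_2(0,\pi)$ be real-valued and $\gamma_j\in\mathbb R$, $j=1,\dots,m$. Put $y_j^{[1]}=y_j'-\sigma_jy_j$ (quasi-derivative) and $\ell_jy_j=-(y_j^{[1]})'-\sigma_jy_j^{[1]}-\sigma_j^2y_j$ on the domain $\{y_j\in W_2^1[0,\pi]: y_j^{[1]}\in W_1^1[0,\pi],\ \ell_jy_j\in L_2(0,\pi)\}$ (this realizes $-y_j''+q_jy_j$ with $q_j=\sigma_j'\in W_2^{-1}(0,\pi)$). If a vertex $u$ corresponds to $x_j=0$ put $y_j(u)=y_j(0)$, $y_j^{[1]}(u)=-y_j^{[1]}(0)$; if $v$ corresponds to $x_j=\pi$ put $y_j(v)=y_j(\pi)$, $y_j^{[1]}(v)=y_j^{[1]}(\pi)+\gamma_jy_j(\pi)$. The problem $L$: $\ell_jy_j=\lambda y_j$ on $(0,\pi)$, $j=1,\dots,m$, with, at each internal vertex $v$, $y_j(v)=y_k(v)$ for $e_j,e_k\in E_v$ and $\sum_{e_j\in E_v}y_j^{[1]}(v)=0$, and at each boundary vertex either the Dirichlet condition $y(v)=0$ or the Neumann condition $y^{[1]}(v)=0$ (a fixed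 choice, called BC). Let $C_j(x,\lambda),S_j(x,\lambda)$ solve $\ell_jy=\lambda y$ with $C_j(0)=S_j^{[1]}(0)=1$, $C_j^{[1]}(0)=S_j(0)=0$. The characteristic function $\Delta(\lambda)$ is defined recursively: (i) if $m=1$: for $y_1(0)=y_1(\pi)=0$, $\Delta=S_1(\pi,\lambda)$; for $y_1(0)=y_1^{[1]}(\pi)=0$, $\Delta=S_1^{[1]}(\pi,\lambda)+\gamma_1S_1(\pi,\lambda)$; for $y_1^{[1]}(0)=y_1(\pi)=0$, $\Delta=C_1(\pi,\lambda)$; for $y_1^{[1]}(0)=y_1^{[1]}(\pi)=0$, $\Delta=C_1^{[1]}(\pi,\lambda)+\gamma_1C_1(\pi,\lambda)$. (ii) if $m>1$: pick an internal vertex $u$ of degree $s$; splitting $G$ at $u$ gives subtrees $G_1,\dots,G_s$ (each containing one edge of $E_u$, $u$ being a boundary vertex of each); let $\Delta_j^D,\Delta_j^N$ be the characteristic functions of the analogous problems on $G_j$ with the Dirichlet, resp. Neumann, condition at $u$, the same matching conditions at internal vertices and BC at the other boundary vertices; then $\Delta=\sum_{j=1}^s\Delta_j^N\prod_{k\ne j}\Delta_k^D$ (independent of the choice of $u$). Throughout, $\rho=\sqrt\lambda$ with $\mathrm{Re}\,\rho\ge0$. *)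

theory Defs
  imports Complex_Main "HOL-Computational_Algebra.Polynomial"
begin

text \<open>A tree with edges 0..<m; edge j runs from vertex src j (x_j = 0) to vertex tgt j (x_j = pi).\<close>

definition tree_vertices :: "nat \<Rightarrow> (nat \<Rightarrow> 'v) \<Rightarrow> (nat \<Rightarrow> 'v) \<Rightarrow> 'v set" where
  "tree_vertices m src tgt = src ` {..<m} \<union> tgt ` {..<m}"

definition is_tree :: "nat \<Rightarrow> (nat \<Rightarrow> 'v) \<Rightarrow> (nat \<Rightarrow> 'v) \<Rightarrow> bool" where
  "is_tree m src tgt \<longleftrightarrow>
     m \<ge> 1 \<and> (\<forall>j<m. src j \<noteq> tgt j) \<and>
     card (tree_vertices m src tgt) = m + 1 \<and>
     (\<forall>v \<in> tree_vertices m src tgt. \<forall>w \<in> tree_vertices m src tgt.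
        (v, w) \<in> ({(src j, tgt j) | j. j < m} \<union> {(tgt j, src j) | j. j < m})\<^sup>*)"

definition inc_edges :: "(nat \<Rightarrow> 'v) \<Rightarrow> (nat \<Rightarrow> 'v) \<Rightarrow> nat set \<Rightarrow> 'v \<Rightarrow> nat set" where
  "inc_edges src tgt E v = {j \<in> E. src j = v \<or> tgt j = v}"

definition deg :: "(nat \<Rightarrow> 'v) \<Rightarrow> (nat \<Rightarrow> 'v) \<Rightarrow> nat set \<Rightarrow> 'v \<Rightarrow> nat" where
  "deg src tgt E v = card (inc_edges src tgt E v)"

definition branch :: "(nat \<Rightarrow> 'v) \<Rightarrow> (nat \<Rightarrow> 'v) \<Rightarrow> nat set \<Rightarrow> 'v \<Rightarrow> nat \<Rightarrow> nat set" where
  "branch src tgt E u j = {k. (j, k) \<in> {(a, b). a \<in> E \<and> b \<in> E \<and>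
        (\<exists>w. w \<noteq> u \<and> w \<in> {src a, tgt a} \<and> w \<in> {src b, tgt b})}\<^sup>*}"

text \<open>Solutions C, S of -y'' = lambda y (zero potential), C(0)=S'(0)=1, C'(0)=S(0)=0, and their
  (quasi-)derivatives, at x = pi; rho = csqrt lambda (Re rho \<ge> 0).\<close>
definition C0 :: "complex \<Rightarrow> complex" where "C0 lam = cos (csqrt lam * pi)"
definition C0' :: "complex \<Rightarrow> complex" where "C0' lam = - csqrt lam * sin (csqrt lam * pi)"
definition S0 :: "complex \<Rightarrow> complex" where
  "S0 lam = (if lam = 0 then of_real pi else sin (csqrt lam * pi) / csqrt lam)"
definition S0' :: "complex \<Rightarrow> complex" where "S0' lam = cos (csqrt lam * pi)"

text \<open>Characteristic function of the zero-potential problem (sigma = 0, gamma = 0) on the subtree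
  with edge set E, with boundary condition b v (True = Dirichlet, False = Neumann) at boundary
  vertices. Any Delta obtained by the recursive definition (with any choice of splitting vertex)
  satisfies char0.\<close>
inductive char0 :: "(nat \<Rightarrow> 'v) \<Rightarrow> (nat \<Rightarrow> 'v) \<Rightarrow> nat set \<Rightarrow> ('v \<Rightarrow> bool) \<Rightarrow> (complex \<Rightarrow> complex) \<Rightarrow> bool"
  for src tgt where
  single: "char0 src tgt {j} b
     (if b (src j) then (if b (tgt j) then S0 else S0') else (if b (tgt j) then C0 else C0'))"
| split: "\<lbrakk> deg src tgt E u \<ge> 2;
            \<forall>j \<in> inc_edges src tgt E u.
               char0 src tgt (branch src tgt E u j) (b(u := True)) (DD j) \<and>
               char0 src tgt (branch src tgt E u j) (b(u := False)) (DN j) \<rbrakk>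
         \<Longrightarrow> char0 src tgt E b (\<lambda>lam. \<Sum>j \<in> inc_edges src tgt E u.
                 DN j lam * (\<Prod>k \<in> inc_edges src tgt E u - {j}. DD k lam))"

definition bipoly_degree :: "(nat \<Rightarrow> nat \<Rightarrow> real) \<Rightarrow> nat \<Rightarrow> bool" where
  "bipoly_degree c n \<longleftrightarrow> (\<forall>i j. c i j \<noteq> 0 \<longrightarrow> i + j \<le> n) \<and> (\<exists>i j. c i j \<noteq> 0 \<and> i + j = n)"

definition bipoly_eval :: "(nat \<Rightarrow> nat \<Rightarrow> real) \<Rightarrow> nat \<Rightarrow> complex \<Rightarrow> complex \<Rightarrow> complex" where
  "bipoly_eval c n x y = (\<Sum>i\<le>n. \<Sum>j\<le>n. of_real (c i j) * x ^ i * y ^ j)"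

end

theory Submission
  imports Defs
begin


lemma mp_add: "map_poly (of_real :: real \<Rightarrow> complex) (p + q) = map_poly of_real p + map_poly of_real q"
  by (intro poly_eqI) (simp add: coeff_map_poly)

lemma mp_smult: "map_poly (of_real :: real \<Rightarrow> complex) (smult a q) = smult (of_real a) (map_poly of_real q)"
  by (intro poly_eqI) (simp add: coeff_map_poly)

lemma rp_mult: "poly (map_poly (of_real :: real \<Rightarrow> complex) (p * q)) x =
   poly (map_poly of_real p) x * poly (map_poly of_real q) x"
proof (induction p)
  case 0 then show ?case by simp
next
  case (pCons a p)
  have "pCons a p * q = smult a q + pCons 0 (p * q)" by (simp add: mult_pCons_left)
  then show ?case using pCons
    by (simp add: mp_add mp_smult map_poly_pCons algebra_simps)
qed

definition epsk :: "int \<Rightarrow> nat" where "epsk k = (if odd k then 1 else 0)"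
definition sgk :: "int \<Rightarrow> real" where
  "sgk k = (if even ((k + int (epsk k)) div 2) then 1 else -1)"

definition FF :: "(complex \<Rightarrow> complex) \<Rightarrow> nat \<Rightarrow> int \<Rightarrow> bool" where
  "FF D n k \<longleftrightarrow> (\<exists>Q :: real poly. degree Q + epsk k = n \<and>
      (\<forall>z. poly Q z = (-1) ^ degree Q * poly Q (- z)) \<and>
      lead_coeff Q * sgk k > 0 \<and>
      (\<forall>lam. lam \<noteq> 0 \<longrightarrow> D lam = csqrt lam powi k *
          (if odd k then sin (csqrt lam * pi) else 1) * poly (map_poly of_real Q) (cos (csqrt lam * pi))))"

lemma sgk_oo: "odd k1 \<Longrightarrow> odd k2 \<Longrightarrow> sgk (k1 + k2) = - (sgk k1 * sgk k2)"
  unfolding sgk_def epsk_def by simp presburger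

lemma sgk_ne: "\<not> (odd k1 \<and> odd k2) \<Longrightarrow> sgk (k1 + k2) = sgk k1 * sgk k2"
  unfolding sgk_def epsk_def by simp presburger

lemma par_mult:
  fixes Q1 Q2 :: "real poly"
  assumes "\<And>z. poly Q1 z = (-1) ^ a * poly Q1 (- z)" "\<And>z. poly Q2 z = (-1) ^ b * poly Q2 (- z)"
  shows "poly (Q1 * Q2) z = (-1) ^ (a + b) * poly (Q1 * Q2) (- z)"
proof -
  have "poly (Q1 * Q2) z = ((-1) ^ a * poly Q1 (- z)) * ((-1) ^ b * poly Q2 (- z))"
    using assms(1)[of z] assms(2)[of z] by (simp only: poly_mult)
  then show ?thesis by (simp add: power_add)
qed

lemma Pc: "poly (map_poly (of_real :: real \<Rightarrow> complex) [:1, 0, -1:]) z = 1 - z^2"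
  by (simp add: poly_altdef degree_map_poly coeff_map_poly power2_eq_square numeral_2_eq_2)

lemma FF_mult:
  assumes "FF f n1 k1" "FF g n2 k2"
  shows "FF (\<lambda>l. f l * g l) (n1 + n2) (k1 + k2)"
proof -
  obtain Q1 where Q1: "degree Q1 + epsk k1 = n1" "\<And>z. poly Q1 z = (-1) ^ degree Q1 * poly Q1 (- z)"
     "lead_coeff Q1 * sgk k1 > 0"
     "\<And>lam. lam \<noteq> 0 \<Longrightarrow> f lam = csqrt lam powi k1 *
          (if odd k1 then sin (csqrt lam * pi) else 1) * poly (map_poly of_real Q1) (cos (csqrt lam * pi))"
    using assms(1) unfolding FF_def by blast
  obtain Q2 where Q2: "degree Q2 + epsk k2 = n2" "\<And>z. poly Q2 z = (-1) ^ degree Q2 * poly Q2 (- z)"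
     "lead_coeff Q2 * sgk k2 > 0"
     "\<And>lam. lam \<noteq> 0 \<Longrightarrow> g lam = csqrt lam powi k2 *
          (if odd k2 then sin (csqrt lam * pi) else 1) * poly (map_poly of_real Q2) (cos (csqrt lam * pi))"
    using assms(2) unfolding FF_def by blast
  have nz1: "Q1 \<noteq> 0" using Q1(3) by auto
  have nz2: "Q2 \<noteq> 0" using Q2(3) by auto
  have pos: "(lead_coeff Q1 * sgk k1) * (lead_coeff Q2 * sgk k2) > 0"
    using Q1(3) Q2(3) by simp
  have par12: "poly (Q1 * Q2) z = (-1) ^ (degree Q1 + degree Q2) * poly (Q1 * Q2) (- z)" for z
    by (rule par_mult) (rule Q1(2), rule Q2(2))
  show ?thesis
  proof (cases "odd k1 \<and> odd k2")
    case True
    define P :: "real poly" where "P = [:1, 0, -1:]"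
    have P0: "P \<noteq> 0" and dP: "degree P = 2" and lP: "lead_coeff P = -1" by (simp_all add: P_def)
    have Pp: "poly P z = (-1) ^ 2 * poly P (- z)" for z by (simp add: P_def)
    define Q where "Q = P * (Q1 * Q2)"
    have dQ: "degree Q = 2 + (degree Q1 + degree Q2)"
      unfolding Q_def using P0 nz1 nz2 dP by (simp add: degree_mult_eq)
    have lQ: "lead_coeff Q = - (lead_coeff Q1 * lead_coeff Q2)"
      unfolding Q_def by (simp add: lead_coeff_mult lP)
    show ?thesis unfolding FF_def
    proof (intro exI[of _ Q] conjI allI impI)
      show "degree Q + epsk (k1 + k2) = n1 + n2"
        using dQ Q1(1) Q2(1) True by (simp add: epsk_def)
      show "poly Q z = (-1) ^ degree Q * poly Q (- z)" for z
        unfolding dQ unfolding Q_def by (rule par_mult) (rule Pp, rule par12)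
      have "lead_coeff Q * sgk (k1 + k2) = (lead_coeff Q1 * sgk k1) * (lead_coeff Q2 * sgk k2)"
        using lQ sgk_oo[of k1 k2] True by (simp add: algebra_simps)
      then show "lead_coeff Q * sgk (k1 + k2) > 0" using pos by simp
      fix lam :: complex assume l: "lam \<noteq> 0"
      have r: "csqrt lam \<noteq> 0" using l by simp
      have s2: "sin (csqrt lam * pi) * sin (csqrt lam * pi) = 1 - cos (csqrt lam * pi) ^ 2"
        using sin_cos_squared_add[of "csqrt lam * pi"] by (simp add: algebra_simps power2_eq_square)
      have "f lam * g lam = csqrt lam powi k1 * csqrt lam powi k2 *
          (sin (csqrt lam * pi) * sin (csqrt lam * pi)) * (poly (map_poly of_real Q1) (cos (csqrt lam * pi))
           * poly (map_poly of_real Q2) (cos (csqrt lam * pi)))"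
        using Q1(4)[OF l] Q2(4)[OF l] True by (simp add: algebra_simps)
      also have "\<dots> = csqrt lam powi (k1 + k2) *
          (if odd (k1 + k2) then sin (csqrt lam * pi) else 1) * poly (map_poly of_real Q) (cos (csqrt lam * pi))"
        unfolding Q_def rp_mult s2 P_def Pc using True r by (simp add: power_int_add)
      finally show "f lam * g lam = csqrt lam powi (k1 + k2) *
          (if odd (k1 + k2) then sin (csqrt lam * pi) else 1) * poly (map_poly of_real Q) (cos (csqrt lam * pi))" .
    qed
  next
    case False
    define Q where "Q = Q1 * Q2"
    have dQ: "degree Q = degree Q1 + degree Q2"
      unfolding Q_def using nz1 nz2 by (simp add: degree_mult_eq)
    have lQ: "lead_coeff Q = lead_coeff Q1 * lead_coeff Q2"
      unfolding Q_def by (simp add: lead_coeff_mult)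
    show ?thesis unfolding FF_def
    proof (intro exI[of _ Q] conjI allI impI)
      show "degree Q + epsk (k1 + k2) = n1 + n2"
        using dQ Q1(1) Q2(1) False by (auto simp add: epsk_def)
      show "poly Q z = (-1) ^ degree Q * poly Q (- z)" for z
        unfolding dQ unfolding Q_def by (rule par12)
      have "lead_coeff Q * sgk (k1 + k2) = (lead_coeff Q1 * sgk k1) * (lead_coeff Q2 * sgk k2)"
        using lQ sgk_ne[of k1 k2] False by (simp add: algebra_simps)
      then show "lead_coeff Q * sgk (k1 + k2) > 0" using pos by simp
      fix lam :: complex assume l: "lam \<noteq> 0"
      have r: "csqrt lam \<noteq> 0" using l by simp
      have "f lam * g lam = csqrt lam powi k1 * csqrt lam powi k2 *
          ((if odd k1 then sin (csqrt lam * pi) else 1) * (if odd k2 then sin (csqrt lam * pi) else 1))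
           * (poly (map_poly of_real Q1) (cos (csqrt lam * pi))
           * poly (map_poly of_real Q2) (cos (csqrt lam * pi)))"
        using Q1(4)[OF l] Q2(4)[OF l] by (simp add: algebra_simps)
      also have "\<dots> = csqrt lam powi (k1 + k2) *
          (if odd (k1 + k2) then sin (csqrt lam * pi) else 1) * poly (map_poly of_real Q) (cos (csqrt lam * pi))"
        unfolding Q_def rp_mult using False r by (auto simp add: power_int_add)
      finally show "f lam * g lam = csqrt lam powi (k1 + k2) *
          (if odd (k1 + k2) then sin (csqrt lam * pi) else 1) * poly (map_poly of_real Q) (cos (csqrt lam * pi))" .
    qed
  qed
qed

lemma FF_add:
  assumes "FF f n k" "FF g n k"
  shows "FF (\<lambda>l. f l + g l) n k"
proof -
  obtain Q1 where Q1: "degree Q1 + epsk k = n" "\<And>z. poly Q1 z = (-1) ^ degree Q1 * poly Q1 (- z)"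
     "lead_coeff Q1 * sgk k > 0"
     "\<And>lam. lam \<noteq> 0 \<Longrightarrow> f lam = csqrt lam powi k *
          (if odd k then sin (csqrt lam * pi) else 1) * poly (map_poly of_real Q1) (cos (csqrt lam * pi))"
    using assms(1) unfolding FF_def by blast
  obtain Q2 where Q2: "degree Q2 + epsk k = n" "\<And>z. poly Q2 z = (-1) ^ degree Q2 * poly Q2 (- z)"
     "lead_coeff Q2 * sgk k > 0"
     "\<And>lam. lam \<noteq> 0 \<Longrightarrow> g lam = csqrt lam powi k *
          (if odd k then sin (csqrt lam * pi) else 1) * poly (map_poly of_real Q2) (cos (csqrt lam * pi))"
    using assms(2) unfolding FF_def by blast
  define D where "D = degree Q1"
  have D2: "degree Q2 = D" using Q1(1) Q2(1) D_def by simp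
  define Q where "Q = Q1 + Q2"
  have cQ: "coeff Q D = lead_coeff Q1 + lead_coeff Q2" unfolding Q_def D_def using D2 D_def by simp
  have pos: "(lead_coeff Q1 + lead_coeff Q2) * sgk k > 0" using Q1(3) Q2(3) by (simp add: distrib_right)
  hence nz: "coeff Q D \<noteq> 0" using cQ by auto
  have dQ: "degree Q = D"
  proof (rule antisym)
    show "degree Q \<le> D" unfolding Q_def using degree_add_le[of Q1 D Q2] D2 D_def by simp
    show "D \<le> degree Q" using nz by (rule le_degree)
  qed
  show ?thesis unfolding FF_def
  proof (intro exI[of _ Q] conjI allI impI)
    show "degree Q + epsk k = n" using dQ Q1(1) D_def by simp
    show "poly Q z = (-1) ^ degree Q * poly Q (- z)" for z
      using Q1(2)[of z] Q2(2)[of z] unfolding dQ unfolding Q_def D_def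
      by (simp add: D2[unfolded D_def] algebra_simps)
    show "lead_coeff Q * sgk k > 0" using pos cQ dQ by simp
    fix lam :: complex assume l: "lam \<noteq> 0"
    show "f lam + g lam = csqrt lam powi k *
          (if odd k then sin (csqrt lam * pi) else 1) * poly (map_poly of_real Q) (cos (csqrt lam * pi))"
      using Q1(4)[OF l] Q2(4)[OF l] unfolding Q_def mp_add by (simp add: algebra_simps)
  qed
qed

lemma FF_one: "FF (\<lambda>l. 1) 0 0"
  unfolding FF_def by (intro exI[of _ "1"]) (simp add: epsk_def sgk_def)

lemma FF_prod:
  assumes "finite A" "\<And>a. a \<in> A \<Longrightarrow> FF (f a) (n a) (k a)"
  shows "FF (\<lambda>l. \<Prod>a\<in>A. f a l) (\<Sum>a\<in>A. n a) (\<Sum>a\<in>A. k a)"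
  using assms
proof (induction A rule: finite_induct)
  case empty then show ?case using FF_one by simp
next
  case (insert x F)
  have "FF (\<lambda>l. f x l * (\<Prod>a\<in>F. f a l)) (n x + (\<Sum>a\<in>F. n a)) (k x + (\<Sum>a\<in>F. k a))"
    using insert by (intro FF_mult) auto
  then show ?case using insert by simp
qed

lemma FF_sum:
  assumes "finite A" "A \<noteq> {}" "\<And>a. a \<in> A \<Longrightarrow> FF (f a) n k"
  shows "FF (\<lambda>l. \<Sum>a\<in>A. f a l) n k"
  using assms
proof (induction A rule: finite_ne_induct)
  case (singleton x) then show ?case by simp
next
  case (insert x F)
  have "FF (\<lambda>l. f x l + (\<Sum>a\<in>F. f a l)) n k"
    using insert by (intro FF_add) auto
  then show ?case using insert by simp
qed

lemma FF_DD: "FF S0 1 (-1)"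
  unfolding FF_def by (intro exI[of _ "1"]) (simp add: epsk_def sgk_def S0_def power_int_minus field_simps)

lemma FF_DN: "FF S0' 1 0"
  unfolding FF_def by (intro exI[of _ "[:0, 1:]"]) (simp add: epsk_def sgk_def S0'_def map_poly_pCons)

lemma FF_ND: "FF C0 1 0"
  unfolding FF_def by (intro exI[of _ "[:0, 1:]"]) (simp add: epsk_def sgk_def C0_def map_poly_pCons)

lemma FF_NN: "FF C0' 1 1"
  unfolding FF_def by (intro exI[of _ "[:-1:]"]) (simp add: epsk_def sgk_def C0'_def map_poly_pCons)

lemma poly_sum_le:
  fixes Q :: "real poly"
  assumes "degree Q \<le> n"
  shows "poly (map_poly of_real Q) (y::complex) = (\<Sum>j\<le>n. of_real (coeff Q j) * y ^ j)"
proof -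
  have dm: "degree (map_poly (of_real :: real \<Rightarrow> complex) Q) \<le> n"
    using degree_map_poly[of "of_real :: real \<Rightarrow> complex" Q] assms by simp
  have "poly (map_poly of_real Q) y = (\<Sum>j\<le>n. coeff (map_poly (of_real :: real \<Rightarrow> complex) Q) j * y ^ j)"
    unfolding poly_altdef
    by (rule sum.mono_neutral_left) (use dm in \<open>auto simp: coeff_eq_0\<close>)
  then show ?thesis by (simp add: coeff_map_poly)
qed

lemma final:
  fixes Q :: "real poly"
  assumes m: "m \<ge> 1" and F: "FF D m (1 - int d)"
  shows "\<exists>(R :: nat \<Rightarrow> nat \<Rightarrow> real) (Q :: real poly).
           bipoly_degree R m \<and>
           degree Q = (if even d then m - 1 else m) \<and>
           (\<forall>z. poly Q z = (-1) ^ degree Q * poly Q (- z)) \<and>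
           (\<forall>lam::complex. lam \<noteq> 0 \<longrightarrow>
              (let \<rho> = csqrt lam in
                D lam = \<rho> powi (1 - int d) * bipoly_eval R m (sin (\<rho> * pi)) (cos (\<rho> * pi)) \<and>
                bipoly_eval R m (sin (\<rho> * pi)) (cos (\<rho> * pi)) =
                  (if even d then sin (\<rho> * pi) * poly (map_poly of_real Q) (cos (\<rho> * pi))
                   else poly (map_poly of_real Q) (cos (\<rho> * pi)))))"
proof -
  obtain Q where Q: "degree Q + epsk (1 - int d) = m" "\<forall>z. poly Q z = (-1) ^ degree Q * poly Q (- z)"
     "lead_coeff Q * sgk (1 - int d) > 0"
     "\<And>lam. lam \<noteq> 0 \<Longrightarrow> D lam = csqrt lam powi (1 - int d) *
          (if odd (1 - int d) then sin (csqrt lam * pi) else 1) * poly (map_poly of_real Q) (cos (csqrt lam * pi))"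
    using F unfolding FF_def by blast
  define e :: nat where "e = (if even d then 1 else 0)"
  have ep: "epsk (1 - int d) = e" unfolding epsk_def e_def by auto
  have dQ: "degree Q + e = m" using Q(1) ep by simp
  have lc: "lead_coeff Q \<noteq> 0" using Q(3) by auto
  define R where "R = (\<lambda>i j. if i = e then coeff Q j else 0)"
  have ev: "bipoly_eval R m x y = x ^ e * poly (map_poly of_real Q) y" for x y
  proof -
    have "bipoly_eval R m x y = (\<Sum>i\<le>m. if i = e then (\<Sum>j\<le>m. of_real (coeff Q j) * x ^ e * y ^ j) else 0)"
      unfolding bipoly_eval_def R_def by (intro sum.cong refl) auto
    also have "\<dots> = (\<Sum>j\<le>m. of_real (coeff Q j) * x ^ e * y ^ j)"
      using dQ m by (subst sum.delta) (auto simp: e_def split: if_splits)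
    also have "\<dots> = x ^ e * (\<Sum>j\<le>m. of_real (coeff Q j) * y ^ j)"
      by (simp add: sum_distrib_left algebra_simps)
    also have "\<dots> = x ^ e * poly (map_poly of_real Q) y"
      using poly_sum_le[of Q m y] dQ by simp
    finally show ?thesis .
  qed
  have bd: "bipoly_degree R m"
    unfolding bipoly_degree_def
  proof (intro conjI allI impI)
    fix i j assume "R i j \<noteq> 0"
    then have "i = e" "coeff Q j \<noteq> 0" unfolding R_def by (auto split: if_splits)
    then show "i + j \<le> m" using le_degree[of Q j] dQ by simp
  next
    show "\<exists>i j. R i j \<noteq> 0 \<and> i + j = m"
      using lc dQ by (intro exI[of _ e] exI[of _ "degree Q"]) (simp add: R_def)
  qed
  show ?thesis
  proof (intro exI[of _ R] exI[of _ Q] conjI allI impI)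
    show "bipoly_degree R m" by (rule bd)
    show "degree Q = (if even d then m - 1 else m)" using dQ unfolding e_def by auto
    show "poly Q z = (-1) ^ degree Q * poly Q (- z)" for z using Q(2) by blast
    fix lam :: complex assume l: "lam \<noteq> 0"
    show "let \<rho> = csqrt lam in
                D lam = \<rho> powi (1 - int d) * bipoly_eval R m (sin (\<rho> * pi)) (cos (\<rho> * pi)) \<and>
                bipoly_eval R m (sin (\<rho> * pi)) (cos (\<rho> * pi)) =
                  (if even d then sin (\<rho> * pi) * poly (map_poly of_real Q) (cos (\<rho> * pi))
                   else poly (map_poly of_real Q) (cos (\<rho> * pi)))"
      unfolding Let_def ev using Q(4)[OF l] by (auto simp: e_def)
  qed
qed



context fixes src tgt :: "nat \<Rightarrow> 'v" begin

definition VE :: "nat set \<Rightarrow> 'v set" where "VE E = src ` E \<union> tgt ` E"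
definition adj :: "nat set \<Rightarrow> ('v \<times> 'v) set" where
  "adj E = {(src j, tgt j) | j. j \<in> E} \<union> {(tgt j, src j) | j. j \<in> E}"
definition rel :: "nat set \<Rightarrow> 'v \<Rightarrow> (nat \<times> nat) set" where
  "rel E u = {(a, b). a \<in> E \<and> b \<in> E \<and> (\<exists>w. w \<noteq> u \<and> w \<in> {src a, tgt a} \<and> w \<in> {src b, tgt b})}"
definition good :: "nat set \<Rightarrow> bool" where
  "good E \<longleftrightarrow> finite E \<and> E \<noteq> {} \<and> (\<forall>j\<in>E. src j \<noteq> tgt j) \<and> card (VE E) = card E + 1 \<and>
     (\<forall>v\<in>VE E. \<forall>w\<in>VE E. (v, w) \<in> (adj E)\<^sup>*)"
definition dc :: "nat set \<Rightarrow> ('v \<Rightarrow> bool) \<Rightarrow> nat" where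
  "dc E b = card {v \<in> VE E. deg src tgt E v = 1 \<and> b v}"

lemma adj_sym: "(a, b) \<in> adj E \<Longrightarrow> (b, a) \<in> adj E"
  unfolding adj_def by auto

lemma adj_star_sym: "(a, b) \<in> (adj E)\<^sup>* \<Longrightarrow> (b, a) \<in> (adj E)\<^sup>*"
proof (induction rule: rtrancl_induct)
  case base then show ?case by simp
next
  case (step y z) then show ?case by (meson adj_sym converse_rtrancl_into_rtrancl)
qed

lemma rel_sym: "(a, b) \<in> rel E u \<Longrightarrow> (b, a) \<in> rel E u"
  unfolding rel_def by auto

lemma rel_star_sym: "(a, b) \<in> (rel E u)\<^sup>* \<Longrightarrow> (b, a) \<in> (rel E u)\<^sup>*"
proof (induction rule: rtrancl_induct)
  case base then show ?case by simp
next
  case (step y z) then show ?case by (meson rel_sym converse_rtrancl_into_rtrancl)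
qed

lemma adj_edge: "e \<in> E \<Longrightarrow> a \<in> {src e, tgt e} \<Longrightarrow> b \<in> {src e, tgt e} \<Longrightarrow> (a, b) \<in> (adj E)\<^sup>*"
  unfolding adj_def by auto

lemma adjE: "(a, b) \<in> adj E \<Longrightarrow> (\<And>e. e \<in> E \<Longrightarrow> a \<in> {src e, tgt e} \<Longrightarrow> b \<in> {src e, tgt e} \<Longrightarrow>
   (a = src e \<and> b = tgt e \<or> a = tgt e \<and> b = src e) \<Longrightarrow> P) \<Longrightarrow> P"
  unfolding adj_def by auto

lemma reach_sub: "{v. (v0, v) \<in> (adj F)\<^sup>*} \<subseteq> insert v0 (VE F)"
proof
  fix v assume "v \<in> {v. (v0, v) \<in> (adj F)\<^sup>*}"
  then have "(v0, v) \<in> (adj F)\<^sup>*" by simp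
  then show "v \<in> insert v0 (VE F)"
  proof (cases rule: rtranclE)
    case (step w) then show ?thesis by (auto elim!: adjE simp: VE_def)
  qed simp
qed

lemma finite_VE: "finite F \<Longrightarrow> finite (VE F)" unfolding VE_def by simp

lemma reach_card:
  assumes fin: "finite F"
  shows "card {v. (v0, v) \<in> (adj F)\<^sup>*} \<le> card F + 1"
proof -
  define A where "A = {v. (v0, v) \<in> (adj F)\<^sup>*}"
  have finA: "finite A" unfolding A_def using reach_sub[of v0 F] finite_VE[OF fin]
    by (meson finite_insert finite_subset)
  define dist where "dist v = (LEAST n. (v0, v) \<in> adj F ^^ n)" for v
  have key: "\<exists>e. e \<in> F \<and> (\<exists>w. dist w < dist v \<and> (src e = w \<and> tgt e = v \<or> tgt e = w \<and> src e = v))"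
    if v: "v \<in> A - {v0}" for v
  proof -
    from v have "(v0, v) \<in> (adj F)\<^sup>*" unfolding A_def by simp
    then obtain n where "(v0, v) \<in> adj F ^^ n" using rtrancl_power by blast
    then have dv: "(v0, v) \<in> adj F ^^ dist v" unfolding dist_def by (rule LeastI)
    have "dist v \<noteq> 0" proof assume "dist v = 0" then show False using dv v by simp qed
    then obtain n' where n': "dist v = Suc n'" using not0_implies_Suc by blast
    with dv obtain w where w1: "(v0, w) \<in> adj F ^^ n'" and w2: "(w, v) \<in> adj F" by auto
    have "dist w \<le> n'" unfolding dist_def using w1 by (rule Least_le)
    then have "dist w < dist v" using n' by simp
    with w2 show ?thesis unfolding adj_def by blast
  qed
  define f where "f v = (SOME e. e \<in> F \<and> (\<exists>w. dist w < dist v \<and> (src e = w \<and> tgt e = v \<or> tgt e = w \<and> src e = v)))" for v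
  have fP: "f v \<in> F \<and> (\<exists>w. dist w < dist v \<and> (src (f v) = w \<and> tgt (f v) = v \<or> tgt (f v) = w \<and> src (f v) = v))"
    if "v \<in> A - {v0}" for v
    unfolding f_def using someI_ex[OF key[OF that]] .
  have inj: "inj_on f (A - {v0})"
  proof (rule inj_onI)
    fix v v' assume v: "v \<in> A - {v0}" and v': "v' \<in> A - {v0}" and eq: "f v = f v'"
    show "v = v'"
    proof (rule ccontr)
      assume ne: "v \<noteq> v'"
      from fP[OF v] obtain w where w: "dist w < dist v" "src (f v) = w \<and> tgt (f v) = v \<or> tgt (f v) = w \<and> src (f v) = v" by blast
      from fP[OF v'] obtain w' where w': "dist w' < dist v'" "src (f v') = w' \<and> tgt (f v') = v' \<or> tgt (f v') = w' \<and> src (f v') = v'" by blast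
      from w(2) w'(2) eq ne have "w = v' \<and> w' = v" by auto
      with w(1) w'(1) show False by simp
    qed
  qed
  have "f ` (A - {v0}) \<subseteq> F" using fP by blast
  then have "card (A - {v0}) \<le> card F" using card_inj_on_le[OF inj _ fin] by blast
  moreover have "card A \<le> card (A - {v0}) + 1" using finA by (cases "v0 \<in> A") (auto simp add: card_Diff_singleton_if card_gt_0_iff)
  ultimately show ?thesis unfolding A_def by simp
qed

lemma branch_iff: "k \<in> branch src tgt E u j \<longleftrightarrow> (j, k) \<in> (rel E u)\<^sup>*"
  unfolding branch_def rel_def by simp

lemma rel_star_E: "(j, k) \<in> (rel E u)\<^sup>* \<Longrightarrow> k = j \<or> k \<in> E"
  by (induction rule: rtrancl_induct) (auto simp: rel_def)

lemma branch_sub: "j \<in> E \<Longrightarrow> branch src tgt E u j \<subseteq> E"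
  using rel_star_E branch_iff by blast

context
  fixes E :: "nat set" and u :: 'v
  assumes good: "good E" and dg: "2 \<le> deg src tgt E u"
begin

abbreviation "J \<equiv> inc_edges src tgt E u"
abbreviation "B \<equiv> branch src tgt E u"

lemma finE: "finite E" using good unfolding good_def by simp
lemma st: "j \<in> E \<Longrightarrow> src j \<noteq> tgt j" using good unfolding good_def by simp
lemma cardV: "card (VE E) = card E + 1" using good unfolding good_def by simp
lemma conn: "v \<in> VE E \<Longrightarrow> w \<in> VE E \<Longrightarrow> (v, w) \<in> (adj E)\<^sup>*" using good unfolding good_def by simp

lemma J_sub: "J \<subseteq> E" unfolding inc_edges_def by auto
lemma finJ: "finite J" using J_sub finE finite_subset by blast
lemma J_ne: "J \<noteq> {}" using dg unfolding deg_def by auto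
lemma J_iff: "j \<in> J \<longleftrightarrow> j \<in> E \<and> u \<in> {src j, tgt j}" unfolding inc_edges_def by auto
lemma uV: "u \<in> VE E" using J_ne unfolding inc_edges_def VE_def by auto

lemma G1:
  assumes j: "j \<in> J" and j': "j' \<in> J" and jb: "j' \<in> B j"
  shows "j' = j"
proof (rule ccontr)
  assume ne: "j' \<noteq> j"
  define x where "x = (if src j = u then tgt j else src j)"
  have jE: "j \<in> E" and j'E: "j' \<in> E" using j j' J_iff by auto
  have ends_j: "{src j, tgt j} = {u, x}" using j J_iff x_def by auto
  have xu: "x \<noteq> u" using st[OF jE] ends_j by auto
  define R' where "R' = adj (E - {j})"
  have P: "\<exists>w. w \<in> {src k, tgt k} \<and> w \<noteq> u \<and> (u, w) \<in> R'\<^sup>*" if "(j', k) \<in> (rel E u)\<^sup>*" for k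
    using that
  proof (induction rule: rtrancl_induct)
    case base
    define y where "y = (if src j' = u then tgt j' else src j')"
    have "y \<in> {src j', tgt j'}" "y \<noteq> u" using st[OF j'E] j' J_iff y_def by auto
    moreover have "(u, y) \<in> R'\<^sup>*" unfolding R'_def using j' J_iff y_def ne j'E
      by (intro adj_edge[of j']) auto
    ultimately show ?case by blast
  next
    case (step k k2)
    from step.IH obtain w where w: "w \<in> {src k, tgt k}" "w \<noteq> u" "(u, w) \<in> R'\<^sup>*" by blast
    from step.hyps(2) obtain w' where w': "w' \<noteq> u" "w' \<in> {src k, tgt k}" "w' \<in> {src k2, tgt k2}" "k \<in> E"
      unfolding rel_def by blast
    have "(u, w') \<in> R'\<^sup>*"
    proof (cases "k = j")
      case True
      then have "w = x" "w' = x" using w w' ends_j by auto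
      then show ?thesis using w by simp
    next
      case False
      then have "(w, w') \<in> R'\<^sup>*" unfolding R'_def using w w' by (intro adj_edge[of k]) auto
      then show ?thesis using w(3) by simp
    qed
    then show ?case using w' by blast
  qed
  have "(j, j') \<in> (rel E u)\<^sup>*" using jb branch_iff by blast
  then have "(j', j) \<in> (rel E u)\<^sup>*" by (rule rel_star_sym)
  from P[OF this] obtain w where "w \<in> {src j, tgt j}" "w \<noteq> u" "(u, w) \<in> R'\<^sup>*" by blast
  then have ux: "(u, x) \<in> R'\<^sup>*" using ends_j by auto
  have reach: "(u, v) \<in> R'\<^sup>*" if "(u, v) \<in> (adj E)\<^sup>*" for v
    using that
  proof (induction rule: rtrancl_induct)
    case base then show ?case by simp
  next
    case (step a b)
    from step.hyps(2) show ?case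
    proof (rule adjE)
      fix e assume e: "e \<in> E" "a \<in> {src e, tgt e}" "b \<in> {src e, tgt e}"
      show ?thesis
      proof (cases "e = j")
        case True
        then have "b = u \<or> b = x" using e ends_j by auto
        then show ?thesis using ux by auto
      next
        case False
        then have "(a, b) \<in> R'\<^sup>*" unfolding R'_def using e by (intro adj_edge[of e]) auto
        then show ?thesis using step.IH by simp
      qed
    qed
  qed
  have sub: "VE E \<subseteq> {v. (u, v) \<in> R'\<^sup>*}" using reach conn uV by blast
  have fin: "finite {v. (u, v) \<in> R'\<^sup>*}" unfolding R'_def
    using reach_sub[of u "E - {j}"] finite_VE[of "E - {j}"] finE
    by (meson finite_Diff finite_insert finite_subset)
  have "card (VE E) \<le> card {v. (u, v) \<in> R'\<^sup>*}" using card_mono[OF fin sub] .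
  also have "\<dots> \<le> card (E - {j}) + 1" unfolding R'_def using finE by (intro reach_card) simp
  also have "\<dots> = card E"
  proof -
    have "card E > 0" using finE jE card_gt_0_iff by blast
    then show ?thesis using finE jE by (simp add: card_Diff_singleton)
  qed
  finally show False using cardV by simp
qed

lemma B_refl: "j \<in> B j" using branch_iff by blast

lemma B_sub: "j \<in> J \<Longrightarrow> B j \<subseteq> E" using branch_sub J_sub by blast

lemma B_closed: "k \<in> B j \<Longrightarrow> (k, k') \<in> rel E u \<Longrightarrow> k' \<in> B j"
  using branch_iff by (meson rtrancl_into_rtrancl)

lemma B_meet: "j \<in> J \<Longrightarrow> j' \<in> J \<Longrightarrow> k \<in> B j \<Longrightarrow> k \<in> B j' \<Longrightarrow> j = j'"
proof -
  assume a: "j \<in> J" "j' \<in> J" "k \<in> B j" "k \<in> B j'"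
  then have "(j, k) \<in> (rel E u)\<^sup>*" "(k, j') \<in> (rel E u)\<^sup>*" using branch_iff rel_star_sym by blast+
  then have "j' \<in> B j" using branch_iff by (meson rtrancl_trans)
  then show ?thesis using G1 a by blast
qed

lemma VD:
  assumes "j \<in> J" "j' \<in> J" "k \<in> B j" "k' \<in> B j'" "v \<noteq> u" "v \<in> {src k, tgt k}" "v \<in> {src k', tgt k'}"
  shows "j = j'"
proof -
  have "k \<in> E" "k' \<in> E" using assms B_sub by blast+
  then have "(k, k') \<in> rel E u" unfolding rel_def using assms by blast
  then have "k' \<in> B j" using assms B_closed by blast
  then show ?thesis using B_meet assms by blast
qed

lemma G4: "E = (\<Union>j\<in>J. B j)"
proof
  show "(\<Union>j\<in>J. B j) \<subseteq> E" using B_sub by blast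
  have C: "\<forall>k\<in>E. w \<in> {src k, tgt k} \<longrightarrow> (\<exists>j\<in>J. k \<in> B j)" if "(u, w) \<in> (adj E)\<^sup>*" for w
    using that
  proof (induction rule: rtrancl_induct)
    case base then show ?case using J_iff B_refl by blast
  next
    case (step a b)
    from step.hyps(2) show ?case
    proof (rule adjE)
      fix e assume e: "e \<in> E" "a \<in> {src e, tgt e}" "b \<in> {src e, tgt e}"
      from step.IH e obtain j0 where j0: "j0 \<in> J" "e \<in> B j0" by blast
      show ?thesis
      proof (intro ballI impI)
        fix k assume k: "k \<in> E" "b \<in> {src k, tgt k}"
        show "\<exists>j\<in>J. k \<in> B j"
        proof (cases "b = u")
          case True then show ?thesis using k J_iff B_refl by blast
        next
          case False
          then have "(e, k) \<in> rel E u" unfolding rel_def using e k by blast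
          then show ?thesis using j0 B_closed by blast
        qed
      qed
    qed
  qed
  show "E \<subseteq> (\<Union>j\<in>J. B j)"
  proof
    fix k assume k: "k \<in> E"
    then have "src k \<in> VE E" unfolding VE_def by simp
    then have "(u, src k) \<in> (adj E)\<^sup>*" using conn uV by blast
    then show "k \<in> (\<Union>j\<in>J. B j)" using C k by blast
  qed
qed

lemma finB: "j \<in> J \<Longrightarrow> finite (B j)" using B_sub finE finite_subset by blast

lemma G5: "card E = (\<Sum>j\<in>J. card (B j))"
proof -
  have "card (\<Union>j\<in>J. B j) = (\<Sum>j\<in>J. card (B j))"
    using finJ finB B_meet by (intro card_UN_disjoint) auto
  then show ?thesis using G4 by simp
qed

lemma VP: "VE E - {u} = (\<Union>j\<in>J. VE (B j) - {u})"
proof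
  show "(\<Union>j\<in>J. VE (B j) - {u}) \<subseteq> VE E - {u}" using B_sub unfolding VE_def by blast
  show "VE E - {u} \<subseteq> (\<Union>j\<in>J. VE (B j) - {u})"
  proof
    fix v assume v: "v \<in> VE E - {u}"
    then obtain k where k: "k \<in> E" "v \<in> {src k, tgt k}" unfolding VE_def by auto
    then obtain j where "j \<in> J" "k \<in> B j" using G4 by blast
    then show "v \<in> (\<Union>j\<in>J. VE (B j) - {u})" using k v unfolding VE_def by auto
  qed
qed

lemma VE_disj: "j \<in> J \<Longrightarrow> j' \<in> J \<Longrightarrow> j \<noteq> j' \<Longrightarrow> (VE (B j) - {u}) \<inter> (VE (B j') - {u}) = {}"
proof -
  assume a: "j \<in> J" "j' \<in> J" "j \<noteq> j'"
  have False if v: "v \<in> VE (B j) - {u}" "v \<in> VE (B j') - {u}" for v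
  proof -
    obtain k where k: "k \<in> B j" "v \<in> {src k, tgt k}" using v(1) unfolding VE_def by auto
    obtain k' where k': "k' \<in> B j'" "v \<in> {src k', tgt k'}" using v(2) unfolding VE_def by auto
    have "j = j'" using VD[OF a(1) a(2) k(1) k'(1) _ k(2) k'(2)] v by blast
    then show False using a by simp
  qed
  then show ?thesis by blast
qed

lemma inc_eq: "j \<in> J \<Longrightarrow> v \<noteq> u \<Longrightarrow> v \<in> VE (B j) \<Longrightarrow> inc_edges src tgt (B j) v = inc_edges src tgt E v"
proof -
  assume a: "j \<in> J" "v \<noteq> u" "v \<in> VE (B j)"
  then obtain k where k: "k \<in> B j" "v \<in> {src k, tgt k}" unfolding VE_def by auto
  have kE: "k \<in> E" using k a B_sub by blast
  show ?thesis
  proof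
    show "inc_edges src tgt (B j) v \<subseteq> inc_edges src tgt E v" using B_sub a unfolding inc_edges_def by blast
    show "inc_edges src tgt E v \<subseteq> inc_edges src tgt (B j) v"
    proof
      fix k' assume "k' \<in> inc_edges src tgt E v"
      then have k': "k' \<in> E" "v \<in> {src k', tgt k'}" unfolding inc_edges_def by auto
      then have "(k, k') \<in> rel E u" unfolding rel_def using k kE a by blast
      then have "k' \<in> B j" using B_closed k by blast
      then show "k' \<in> inc_edges src tgt (B j) v" using k' unfolding inc_edges_def by auto
    qed
  qed
qed

lemma inc_u: "j \<in> J \<Longrightarrow> inc_edges src tgt (B j) u = {j}"
proof -
  assume j: "j \<in> J"
  have "inc_edges src tgt (B j) u = B j \<inter> J" using B_sub[OF j] unfolding inc_edges_def by auto
  also have "\<dots> = {j}" using G1 j B_refl by blast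
  finally show ?thesis .
qed

lemma uVB: "j \<in> J \<Longrightarrow> u \<in> VE (B j)" using B_refl J_iff unfolding VE_def by blast

lemma B_conn0: "(j, k) \<in> (rel E u)\<^sup>* \<Longrightarrow> j \<in> J \<Longrightarrow> w \<in> {src k, tgt k} \<Longrightarrow> (src j, w) \<in> (adj (B j))\<^sup>*"
proof (induction k arbitrary: w rule: rtrancl_induct)
  case base then show ?case using B_refl by (intro adj_edge[of j]) auto
next
  case (step k k2)
  from step.hyps(2) obtain w' where w': "w' \<in> {src k, tgt k}" "w' \<in> {src k2, tgt k2}"
    unfolding rel_def by blast
  have "(src j, w') \<in> (adj (B j))\<^sup>*" using step.IH step.prems w' by blast
  moreover have "k2 \<in> B j" using step.hyps branch_iff by (meson rtrancl_into_rtrancl)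
  then have "(w', w) \<in> (adj (B j))\<^sup>*" using w' step.prems by (intro adj_edge[of k2]) auto
  ultimately show ?case by simp
qed

lemma B_conn: "j \<in> J \<Longrightarrow> v \<in> VE (B j) \<Longrightarrow> (src j, v) \<in> (adj (B j))\<^sup>*"
  unfolding VE_def using B_conn0 branch_iff by blast

lemma B_card_le: "j \<in> J \<Longrightarrow> card (VE (B j)) \<le> card (B j) + 1"
proof -
  assume j: "j \<in> J"
  have sub: "VE (B j) \<subseteq> {v. (src j, v) \<in> (adj (B j))\<^sup>*}" using B_conn j by blast
  have fin: "finite {v. (src j, v) \<in> (adj (B j))\<^sup>*}"
    using reach_sub[of "src j" "B j"] finite_VE[OF finB[OF j]] by (meson finite_insert finite_subset)
  show ?thesis using card_mono[OF fin sub] reach_card[OF finB[OF j], of "src j"] by simp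
qed

lemma B_card: "j \<in> J \<Longrightarrow> card (VE (B j)) = card (B j) + 1"
proof (rule ccontr)
  assume j: "j \<in> J" and ne: "card (VE (B j)) \<noteq> card (B j) + 1"
  have finV: "finite (VE (B j'))" if "j' \<in> J" for j' using finite_VE finB that by blast
  have cm: "card (VE (B j') - {u}) = card (VE (B j')) - 1" if "j' \<in> J" for j'
    using finV[OF that] uVB[OF that] by simp
  have le: "card (VE (B j') - {u}) \<le> card (B j')" if "j' \<in> J" for j'
    using cm[OF that] B_card_le[OF that] by simp
  have lt: "card (VE (B j) - {u}) < card (B j)" using cm[OF j] B_card_le[OF j] 
  proof -
    have "card (B j) > 0" using B_refl finB[OF j] card_gt_0_iff by blast
    then show ?thesis using cm[OF j] B_card_le[OF j] ne by linarith
  qed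
  have "card (VE E - {u}) = (\<Sum>j\<in>J. card (VE (B j) - {u}))"
    unfolding VP using finJ finV VE_disj by (intro card_UN_disjoint) auto
  also have "\<dots> < (\<Sum>j\<in>J. card (B j))" using finJ le lt j by (intro sum_strict_mono_ex1) auto
  also have "\<dots> = card E" using G5 by simp
  finally show False using cardV uV finite_VE[OF finE] by simp
qed

lemma B_good: "j \<in> J \<Longrightarrow> good (B j)"
proof -
  assume j: "j \<in> J"
  have "\<forall>v\<in>VE (B j). \<forall>w\<in>VE (B j). (v, w) \<in> (adj (B j))\<^sup>*"
    using B_conn[OF j] adj_star_sym by (meson rtrancl_trans)
  then show ?thesis unfolding good_def
  proof (intro conjI)
    show "finite (B j)" using finB[OF j] .
    show "B j \<noteq> {}" using B_refl by blast
    show "\<forall>k\<in>B j. src k \<noteq> tgt k" using B_sub[OF j] st by blast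
    show "card (VE (B j)) = card (B j) + 1" using B_card[OF j] .
  qed
qed

definition X :: "('v \<Rightarrow> bool) \<Rightarrow> nat \<Rightarrow> 'v set" where
  "X b j = {v \<in> VE (B j). v \<noteq> u \<and> deg src tgt E v = 1 \<and> b v}"

lemma dcT: "j \<in> J \<Longrightarrow> dc (B j) (b(u := True)) = card (X b j) + 1"
proof -
  assume j: "j \<in> J"
  have "{v \<in> VE (B j). deg src tgt (B j) v = 1 \<and> (b(u := True)) v} = insert u (X b j)"
    unfolding X_def deg_def using inc_u[OF j] uVB[OF j] inc_eq[OF j] by auto
  moreover have "finite (X b j)" unfolding X_def using finite_VE[OF finB[OF j]] by simp
  moreover have "u \<notin> X b j" unfolding X_def by simp
  ultimately show ?thesis unfolding dc_def by simp
qed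

lemma dcF: "j \<in> J \<Longrightarrow> dc (B j) (b(u := False)) = card (X b j)"
proof -
  assume j: "j \<in> J"
  have "{v \<in> VE (B j). deg src tgt (B j) v = 1 \<and> (b(u := False)) v} = X b j"
    unfolding X_def deg_def using inc_u[OF j] uVB[OF j] inc_eq[OF j] by auto
  then show ?thesis unfolding dc_def by simp
qed

lemma dcE: "dc E b = (\<Sum>j\<in>J. card (X b j))"
proof -
  have "{v \<in> VE E. deg src tgt E v = 1 \<and> b v} = (\<Union>j\<in>J. X b j)"
  proof -
    have "{v \<in> VE E. deg src tgt E v = 1 \<and> b v} = {v \<in> VE E - {u}. deg src tgt E v = 1 \<and> b v}"
      using dg by auto
    also have "\<dots> = (\<Union>j\<in>J. X b j)" unfolding VP X_def by auto
    finally show ?thesis .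
  qed
  moreover have "card (\<Union>j\<in>J. X b j) = (\<Sum>j\<in>J. card (X b j))"
  proof (rule card_UN_disjoint)
    show "finite J" by (rule finJ)
    show "\<forall>j\<in>J. finite (X b j)" unfolding X_def using finite_VE finB by auto
    show "\<forall>j\<in>J. \<forall>j'\<in>J. j \<noteq> j' \<longrightarrow> X b j \<inter> X b j' = {}"
    proof (intro ballI impI)
      fix j j' assume a: "j \<in> J" "j' \<in> J" "j \<noteq> j'"
      have "X b j \<subseteq> VE (B j) - {u}" "X b j' \<subseteq> VE (B j') - {u}" unfolding X_def by auto
      then show "X b j \<inter> X b j' = {}" using VE_disj[OF a] by blast
    qed
  qed
  ultimately show ?thesis unfolding dc_def by simp
qed

end

end


lemma main:
  assumes "char0 src tgt E b D"
  shows "good src tgt E \<Longrightarrow> FF D (card E) (1 - int (dc src tgt E b))"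
  using assms
proof (induction rule: char0.induct)
  case (single j b)
  have st: "src j \<noteq> tgt j" using single unfolding good_def by simp
  have V: "VE src tgt {j} = {src j, tgt j}" unfolding VE_def by auto
  have dg: "deg src tgt {j} v = 1" if "v \<in> {src j, tgt j}" for v
  proof -
    have "inc_edges src tgt {j} v = {j}" using that unfolding inc_edges_def by auto
    then show ?thesis unfolding deg_def by simp
  qed
  have dcv: "dc src tgt {j} b = card {v \<in> {src j, tgt j}. b v}"
    unfolding dc_def V using dg by (metis (no_types, lifting))
  have se: "{v \<in> {src j, tgt j}. b v} = (if b (src j) then {src j} else {}) \<union> (if b (tgt j) then {tgt j} else {})"
    by auto
  show ?case
    using st FF_DD FF_DN FF_ND FF_NN unfolding dcv se
    by (cases "b (src j)"; cases "b (tgt j)") auto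
next
  case (split E u b DD DN)
  let ?J = "inc_edges src tgt E u"
  let ?B = "branch src tgt E u"
  have g: "good src tgt E" by (rule split.prems)
  have dg: "2 \<le> deg src tgt E u" by (rule split.hyps(1))
  define dN where "dN j = dc src tgt (?B j) (b(u := False))" for j
  have IH: "FF (DD j) (card (?B j)) (- int (dN j)) \<and> FF (DN j) (card (?B j)) (1 - int (dN j))"
    if j: "j \<in> ?J" for j
  proof -
    have gB: "good src tgt (?B j)" using B_good[OF g dg j] .
    have "dc src tgt (?B j) (b(u := True)) = dN j + 1" unfolding dN_def
      using dcT[OF g dg j] dcF[OF g dg j] by simp
    moreover have "FF (DD j) (card (?B j)) (1 - int (dc src tgt (?B j) (b(u := True)))) \<and>
        FF (DN j) (card (?B j)) (1 - int (dc src tgt (?B j) (b(u := False))))"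
      using split.IH j gB by (simp add: fun_upd_def)
    ultimately show ?thesis unfolding dN_def by simp
  qed
  have fJ: "finite ?J" using finJ[OF g dg] .
  have nJ: "?J \<noteq> {}" using J_ne[OF g dg] .
  have cE: "card E = (\<Sum>j\<in>?J. card (?B j))" using G5[OF g dg] .
  have dE: "dc src tgt E b = (\<Sum>j\<in>?J. dN j)" unfolding dN_def using dcE[OF g dg] dcF[OF g dg] by simp
  have T: "FF (\<lambda>l. DN j l * (\<Prod>k\<in>?J - {j}. DD k l)) (card E) (1 - int (dc src tgt E b))"
    if j: "j \<in> ?J" for j
  proof -
    have P: "FF (\<lambda>l. \<Prod>k\<in>?J - {j}. DD k l) (\<Sum>k\<in>?J - {j}. card (?B k)) (\<Sum>k\<in>?J - {j}. - int (dN k))"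
      using fJ IH by (intro FF_prod) auto
    have M: "FF (\<lambda>l. DN j l * (\<Prod>k\<in>?J - {j}. DD k l)) (card (?B j) + (\<Sum>k\<in>?J - {j}. card (?B k)))
        ((1 - int (dN j)) + (\<Sum>k\<in>?J - {j}. - int (dN k)))"
      using IH[OF j] P by (intro FF_mult) auto
    have e1: "card (?B j) + (\<Sum>k\<in>?J - {j}. card (?B k)) = card E"
      unfolding cE using fJ j by (simp add: sum.remove)
    have e2: "(1 - int (dN j)) + (\<Sum>k\<in>?J - {j}. - int (dN k)) = 1 - int (dc src tgt E b)"
      unfolding dE using fJ j by (simp add: sum.remove sum_negf)
    show ?thesis using M unfolding e1 e2 .
  qed
  show ?case using FF_sum[OF fJ nJ T] by simp
qed


theorem lemma1:
  fixes m :: nat and src tgt :: "nat \<Rightarrow> 'v" and BC :: "'v \<Rightarrow> bool"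
    and \<Delta>0 :: "complex \<Rightarrow> complex"
  assumes "is_tree m src tgt"
    and "char0 src tgt {..<m} BC \<Delta>0"
  defines "d \<equiv> card {v \<in> tree_vertices m src tgt. deg src tgt {..<m} v = 1 \<and> BC v}"
  shows "\<exists>(R :: nat \<Rightarrow> nat \<Rightarrow> real) (Q :: real poly).
           bipoly_degree R m \<and>
           degree Q = (if even d then m - 1 else m) \<and>
           (\<forall>z. poly Q z = (-1) ^ degree Q * poly Q (- z)) \<and>
           (\<forall>lam::complex. lam \<noteq> 0 \<longrightarrow>
              (let \<rho> = csqrt lam in
                \<Delta>0 lam = \<rho> powi (1 - int d) * bipoly_eval R m (sin (\<rho> * pi)) (cos (\<rho> * pi)) \<and>
                bipoly_eval R m (sin (\<rho> * pi)) (cos (\<rho> * pi)) =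
                  (if even d then sin (\<rho> * pi) * poly (map_poly of_real Q) (cos (\<rho> * pi))
                   else poly (map_poly of_real Q) (cos (\<rho> * pi)))))"
proof -
  have tv: "tree_vertices m src tgt = VE src tgt {..<m}" unfolding tree_vertices_def VE_def by simp
  have ad: "{(src j, tgt j) | j. j < m} \<union> {(tgt j, src j) | j. j < m} = adj src tgt {..<m}"
    unfolding adj_def by auto
  have m1: "m \<ge> 1" using assms(1) unfolding is_tree_def by simp
  have "0 \<in> {..<m}" using m1 by simp
  then have ne: "{..<m} \<noteq> {}" by blast
  have g: "good src tgt {..<m}" using assms(1) ne unfolding is_tree_def good_def tv ad by simp
  have dd: "d = dc src tgt {..<m} BC" unfolding d_def dc_def tv ..
  have "FF \<Delta>0 m (1 - int d)" using main[OF assms(2) g] unfolding dd by simp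
  then show ?thesis by (rule final[OF m1])
qed

end
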